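(* For any pointed irregular type $Q$ with $K=\max_i\mathrm{slope}(q_i)$, the spaces $\mathbf{SB}(Q)$ and $\mathbf B(Q)$ (which are complex manifolds, Zariski open in complex vector spaces) are homotopy equivalent, and $\dim_{\mathbb C}\mathbf{SB}(Q)=\dim_{\mathbb C}\mathbf B(Q)-\lfloor K\rfloor$.
   Context: Exponential factors: finite sums $q=\sum_ka_kx^k$, $a_k\in\mathbb C$, $k\in\mathbb Q_{>0}$; $\mathrm{slope}(q)$ = largest exponent with nonzero coefficient ($0$ if $q=0$); $\mathrm{ram}(q)$ = least $r\ge1$ with $q\in x^{1/r}\mathbb C[x^{1/r}]$. Galois operator $\sigma(\sum a_kx^k)=\sum a_ke^{-2\pi\sqrt{-1}k}x^k$. Pointed irregular type: $Q=[(n_1,q_1),\dots,(n_m,q_m)]$ with $n_i\in\mathbb N_{>0}$, $q_i$ in pairwise distinct Galois orbits; $Q'\sim Q$ means same length and multiplicities and $\mathrm{slope}(\sigma^k(q'_i)-\sigma^l(q'_j))=\mathrm{slope}(\sigma^k(q_i)-\sigma^l(q_j))$ for all $i,j$, $0\le k\le\mathrm{ram}(q_i)$, $0\le l\le\mathrm{ram}(q_j)$. Configuration spaces: $r=\mathrm{lcm}_i\mathrm{ram}(q_i)$, $K=\max_i\mathrm{slope}(q_i)$, $s=rK$; for $\mathbf a\in\mathbb C^{ms}$, $Q_{\mathbf a}=[(n_i,\sum_{j=1}^sa_{i,j}x^{j/r})]_{i=1}^m$. $\mathbf B(Q)=\{\mathbf a:Q_{\mathbf a}\sim Q\}$ with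 subspace topology; $\mathbf{SB}(Q)=\{\mathbf a\in\mathbf B(Q):\mathrm{Tr}(Q_{\mathbf a})=0\}$ where $\mathrm{Tr}([(n_i,p_i)])=\sum_in_i\sum_{t=0}^{\mathrm{ram}(p_i)-1}\sigma^t(p_i)$. *)

theory Defs
  imports "HOL-Analysis.Analysis" "HOL-Library.Function_Algebras"
begin

text \<open>Exponential factors: a finite sum of a_k x^k with k rational and positive,
  represented by its coefficient function rat to complex.\<close>
type_synonym expf = "rat \<Rightarrow> complex"

definition expfactor :: "expf \<Rightarrow> bool" where
  "expfactor q \<longleftrightarrow> finite {k. q k \<noteq> 0} \<and> (\<forall>k. q k \<noteq> 0 \<longrightarrow> k > 0)"

definition slope :: "expf \<Rightarrow> rat" where
  "slope q = (if {k. q k \<noteq> 0} = {} then 0 else Max {k. q k \<noteq> 0})"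

definition ram :: "expf \<Rightarrow> nat" where
  "ram q = (LEAST r::nat. r \<ge> 1 \<and> (\<forall>k. q k \<noteq> 0 \<longrightarrow> (\<exists>j::int. k = of_int j / of_nat r)))"

definition gal :: "expf \<Rightarrow> expf" where
  "gal q = (\<lambda>k. exp (- 2 * of_real pi * \<i> * of_rat k) * q k)"

definition fdiff :: "expf \<Rightarrow> expf \<Rightarrow> expf" where
  "fdiff p q = (\<lambda>k. p k - q k)"

text \<open>Pointed irregular types: lists of (multiplicity, exponential factor); indices from 0.\<close>
type_synonym pit = "(nat \<times> expf) list"

definition is_pit :: "pit \<Rightarrow> bool" where
  "is_pit Q \<longleftrightarrow> (\<forall>i < length Q. fst (Q ! i) > 0 \<and> expfactor (snd (Q ! i))) \<and>
     (\<forall>i < length Q. \<forall>j < length Q. i \<noteq> j \<longrightarrow>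
        (\<forall>t. (gal ^^ t) (snd (Q ! i)) \<noteq> snd (Q ! j)))"

definition pit_equiv :: "pit \<Rightarrow> pit \<Rightarrow> bool" (infix "\<sim>\<^sub>p" 50) where
  "Q' \<sim>\<^sub>p Q \<longleftrightarrow> is_pit Q' \<and> is_pit Q \<and> length Q' = length Q \<and> map fst Q' = map fst Q \<and>
     (\<forall>i < length Q. \<forall>j < length Q. \<forall>k \<le> ram (snd (Q ! i)). \<forall>l \<le> ram (snd (Q ! j)).
        slope (fdiff ((gal ^^ k) (snd (Q' ! i))) ((gal ^^ l) (snd (Q' ! j))))
      = slope (fdiff ((gal ^^ k) (snd (Q ! i))) ((gal ^^ l) (snd (Q ! j)))))"

definition ramQ :: "pit \<Rightarrow> nat" where
  "ramQ Q = Lcm (set (map (ram \<circ> snd) Q))"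

definition maxslope :: "pit \<Rightarrow> rat" where
  "maxslope Q = Max (insert 0 (set (map (slope \<circ> snd) Q)))"

definition sQ :: "pit \<Rightarrow> nat" where
  "sQ Q = nat \<lfloor>of_nat (ramQ Q) * maxslope Q\<rfloor>"

text \<open>Configurations: a point of C^(m s) is a function on index pairs (i,j), i < m, 1 \<le> j \<le> s,
  extended by zero elsewhere; the ambient function space carries the product topology,
  which on this finite-coordinate subspace is the Euclidean topology of C^(m s).\<close>
definition conf :: "nat \<Rightarrow> nat \<Rightarrow> (nat \<times> nat \<Rightarrow> complex) set" where
  "conf m s = {a. \<forall>i j. (i \<ge> m \<or> j = 0 \<or> j > s) \<longrightarrow> a (i, j) = 0}"

definition factor_of :: "nat \<Rightarrow> nat \<Rightarrow> (nat \<times> nat \<Rightarrow> complex) \<Rightarrow> nat \<Rightarrow> expf" where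
  "factor_of r s a i = (\<lambda>k. if \<exists>j::nat. 1 \<le> j \<and> j \<le> s \<and> k = of_nat j / of_nat r
                             then a (i, nat \<lfloor>k * of_nat r\<rfloor>) else 0)"

definition Q_a :: "pit \<Rightarrow> (nat \<times> nat \<Rightarrow> complex) \<Rightarrow> pit" where
  "Q_a Q a = map (\<lambda>i. (fst (Q ! i), factor_of (ramQ Q) (sQ Q) a i)) [0..<length Q]"

definition Bsp :: "pit \<Rightarrow> (nat \<times> nat \<Rightarrow> complex) set" where
  "Bsp Q = {a \<in> conf (length Q) (sQ Q). Q_a Q a \<sim>\<^sub>p Q}"

definition Tr :: "pit \<Rightarrow> expf" where
  "Tr Q = (\<lambda>k. \<Sum>i < length Q. of_nat (fst (Q ! i)) *
              (\<Sum>t < ram (snd (Q ! i)). (gal ^^ t) (snd (Q ! i)) k))"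

definition SBsp :: "pit \<Rightarrow> (nat \<times> nat \<Rightarrow> complex) set" where
  "SBsp Q = {a \<in> Bsp Q. Tr (Q_a Q a) = (\<lambda>_. 0)}"

text \<open>Complex-linear structure on configurations, and complex dimension (dimension of the
  complex span; for a set open in a complex subspace V this is dim V).\<close>
definition cscale :: "complex \<Rightarrow> (nat \<times> nat \<Rightarrow> complex) \<Rightarrow> (nat \<times> nat \<Rightarrow> complex)" where
  "cscale c a = (\<lambda>p. c * a p)"

definition cspan :: "(nat \<times> nat \<Rightarrow> complex) set \<Rightarrow> (nat \<times> nat \<Rightarrow> complex) set" where
  "cspan S = module.span cscale S"

definition cdim :: "(nat \<times> nat \<Rightarrow> complex) set \<Rightarrow> nat" where
  "cdim S = vector_space.dim cscale S"

end

theory Submission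
  imports Defs
begin


lemma of_rat_complex: "(of_rat e :: complex) = of_real (of_rat e)"
  by (cases e) (simp add: of_rat_rat)

definition zeta :: "rat \<Rightarrow> complex" where
  "zeta e = exp (- 2 * of_real pi * \<i> * of_rat e)"

lemma gal_pow: "(gal ^^ k) q = (\<lambda>e. zeta e ^ k * q e)"
  by (induction k) (auto simp: gal_def zeta_def fun_eq_iff)

lemma T1: fixes x :: real and n :: int assumes "- 2 * pi * x = of_int (2*n) * pi" shows "x = of_int (-n)"
proof -
  have "pi * (x + of_int n) * 2 = 0" using assms by (simp add: algebra_simps)
  then show ?thesis by simp
qed
lemma T2: fixes y :: real assumes "exp (Complex 0 y) = 1" obtains n :: int where "y = of_int (2*n) * pi"
  using assms unfolding exp_eq_1 by auto
lemma T3: fixes e :: rat and n :: int assumes "of_rat e = (of_int n :: real)" shows "e = of_int n"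
  using assms by (metis of_rat_eq_iff of_rat_of_int_eq)
lemma T4: fixes y :: real and n :: int assumes "y = of_int (2*n) * pi" shows "exp (Complex 0 y) = 1"
  unfolding exp_eq_1 using assms by auto

lemma zeta_pow_eq_1: "zeta e ^ k = 1 \<longleftrightarrow> e * of_nat k \<in> \<int>"
proof -
  have "zeta e ^ k = exp (of_nat k * (- 2 * of_real pi * \<i> * of_rat e))"
    unfolding zeta_def by (rule exp_of_nat_mult[symmetric])
  also have "\<dots> = exp (Complex 0 (- 2 * pi * (of_rat (e * of_nat k))))"
    by (rule arg_cong[where f=exp]) (simp add: complex_eq_iff of_rat_mult of_rat_complex)
  finally have 1: "zeta e ^ k = exp (Complex 0 (- 2 * pi * (of_rat (e * of_nat k))))" .
  show ?thesis
  proof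
    assume "zeta e ^ k = 1"
    then have "exp (Complex 0 (- 2 * pi * (of_rat (e * of_nat k)))) = 1" using 1 by simp
    then obtain n :: int where "- 2 * pi * (of_rat (e * of_nat k)) = of_int (2*n) * pi"
      by (rule T2)
    then have "of_rat (e * of_nat k) = (of_int (-n) :: real)" by (rule T1)
    then have "e * of_nat k = of_int (-n)" by (rule T3)
    then show "e * of_nat k \<in> \<int>" by simp
  next
    assume "e * of_nat k \<in> \<int>"
    then obtain n :: int where n: "e * of_nat k = of_int n" by (auto elim: Ints_cases)
    then have "- 2 * pi * (of_rat (e * of_nat k)) = of_int (2 * (-n)) * pi" by simp
    then have "exp (Complex 0 (- 2 * pi * (of_rat (e * of_nat k)))) = 1" by (rule T4)
    then show "zeta e ^ k = 1" using 1 by simp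
  qed
qed

lemma zeta_eq_1: "zeta e = 1 \<longleftrightarrow> e \<in> \<int>"
  using zeta_pow_eq_1[of e 1] by simp

definition good :: "expf \<Rightarrow> nat \<Rightarrow> bool" where
  "good q r \<longleftrightarrow> (\<forall>e. q e \<noteq> 0 \<longrightarrow> e * of_nat r \<in> \<int>)"

lemma gal_pow_fix: "(gal ^^ k) q = q \<longleftrightarrow> good q k"
proof -
  have "(gal ^^ k) q = q \<longleftrightarrow> (\<forall>e. q e \<noteq> 0 \<longrightarrow> zeta e ^ k = 1)"
    by (auto simp: gal_pow fun_eq_iff)
  then show ?thesis by (simp add: good_def zeta_pow_eq_1)
qed

lemma grid_iff: fixes k :: rat assumes "r \<ge> 1" shows "(\<exists>j::int. k = of_int j / of_nat r) \<longleftrightarrow> k * of_nat r \<in> \<int>"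
proof
  assume "\<exists>j::int. k = of_int j / of_nat r"
  then obtain j :: int where "k = of_int j / of_nat r" by auto
  moreover have "(of_nat r :: rat) \<noteq> 0" using assms by simp
  ultimately have "k * of_nat r = of_int j" by simp
  then show "k * of_nat r \<in> \<int>" by simp
next
  assume "k * of_nat r \<in> \<int>"
  then obtain j :: int where "k * of_nat r = of_int j" by (auto elim: Ints_cases)
  then have "k = of_int j / of_nat r" using assms by (simp add: field_simps)
  then show "\<exists>j::int. k = of_int j / of_nat r" by blast
qed

lemma ram_good: "ram q = (LEAST r. r \<ge> 1 \<and> good q r)"
  unfolding ram_def good_def
  by (rule arg_cong[where f=Least]) (auto simp: fun_eq_iff grid_iff)

lemma ram_props:
  assumes "r \<ge> 1" "good q r"
  shows "ram q \<ge> 1" "good q (ram q)" "ram q \<le> r"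
    "\<And>k. 1 \<le> k \<Longrightarrow> k < ram q \<Longrightarrow> \<not> good q k"
proof -
  let ?P = "\<lambda>r. r \<ge> 1 \<and> good q r"
  have Pr: "?P r" using assms by blast
  have L: "?P (Least ?P)" by (rule LeastI[of ?P, OF Pr])
  show "ram q \<ge> 1" using L unfolding ram_good by blast
  show "good q (ram q)" using L unfolding ram_good by blast
  show "ram q \<le> r" unfolding ram_good by (rule Least_le[of ?P, OF Pr])
  fix k assume k: "1 \<le> k" "k < ram q"
  have "\<not> ?P k" using k(2) unfolding ram_good by (rule not_less_Least)
  then show "\<not> good q k" using k(1) by blast
qed

lemma ram_unique:
  assumes "R \<ge> 1" "good q R" "\<And>k. 1 \<le> k \<Longrightarrow> k < R \<Longrightarrow> \<not> good q k"
  shows "ram q = R"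
  unfolding ram_good
  by (rule Least_equality) (use assms in \<open>auto simp: not_less[symmetric]\<close>)

lemma slope_char:
  assumes fin: "finite {k. f k \<noteq> 0}" and pos: "\<And>k. f k \<noteq> 0 \<Longrightarrow> k > 0" and d: "d \<ge> 0"
  shows "slope f = d \<longleftrightarrow> (\<forall>e>d. f e = 0) \<and> (d \<noteq> 0 \<longrightarrow> f d \<noteq> 0)"
proof (cases "{k. f k \<noteq> 0} = {}")
  case True
  then show ?thesis by (auto simp: slope_def)
next
  case False
  let ?S = "{k. f k \<noteq> 0}"
  have M: "Max ?S \<in> ?S" using Max_in[OF fin False] .
  have le: "\<And>k. f k \<noteq> 0 \<Longrightarrow> k \<le> Max ?S" using Max_ge[OF fin] by auto
  have Mpos: "Max ?S > 0" using M pos by auto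
  have sl: "slope f = Max ?S" unfolding slope_def by (rule if_not_P[OF False])
  show ?thesis
  proof
    assume "slope f = d"
    then show "(\<forall>e>d. f e = 0) \<and> (d \<noteq> 0 \<longrightarrow> f d \<noteq> 0)"
      using sl M le by (auto simp: not_le[symmetric])
  next
    assume h: "(\<forall>e>d. f e = 0) \<and> (d \<noteq> 0 \<longrightarrow> f d \<noteq> 0)"
    have h1: "\<forall>e>d. f e = 0" and h2: "d \<noteq> 0 \<longrightarrow> f d \<noteq> 0" using h by auto
    have "\<not> (Max ?S > d)"
    proof
      assume "Max ?S > d"
      then have "f (Max ?S) = 0" using h1 by blast
      with M show False by simp
    qed
    then have 1: "Max ?S \<le> d" by (simp add: not_less)
    have "d \<noteq> 0" using 1 Mpos by auto
    then have "f d \<noteq> 0" using h2 by blast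
    then have "d \<le> Max ?S" using le by blast
    with 1 sl show "slope f = d" by simp
  qed
qed

lemma slope_nonneg:
  assumes fin: "finite {k. f k \<noteq> 0}" and pos: "\<And>k. f k \<noteq> 0 \<Longrightarrow> k > 0"
  shows "slope f \<ge> 0"
proof (cases "{k. f k \<noteq> 0} = {}")
  case False
  have sl: "slope f = Max {k. f k \<noteq> 0}" unfolding slope_def by (rule if_not_P[OF False])
  have "Max {k. f k \<noteq> 0} \<in> {k. f k \<noteq> 0}" using Max_in[OF fin False] .
  then have "Max {k. f k \<noteq> 0} > 0" using pos by blast
  then show ?thesis using sl by simp
qed (simp add: slope_def)

lemma slope_zero_iff:
  assumes fin: "finite {k. f k \<noteq> 0}" and pos: "\<And>k. f k \<noteq> 0 \<Longrightarrow> k > 0"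
  shows "slope f = 0 \<longleftrightarrow> f = (\<lambda>_. 0)"
  using slope_char[OF fin pos, of 0] pos by (auto simp: fun_eq_iff)

lemma sum_fun_apply: "(sum f A) x = sum (\<lambda>a. f a x) A"
  by (induction A rule: infinite_finite_induct) auto


lemma exists_common_denom: "finite (S :: rat set) \<Longrightarrow> \<exists>r::nat. r \<ge> 1 \<and> (\<forall>e\<in>S. e * of_nat r \<in> \<int>)"
proof (induction S rule: finite_induct)
  case empty
  then show ?case by (intro exI[of _ 1]) auto
next
  case (insert x S)
  then obtain r :: nat where r: "r \<ge> 1" "\<forall>e\<in>S. e * of_nat r \<in> \<int>" by blast
  obtain a b where ab: "quotient_of x = (a, b)" by (cases "quotient_of x")
  have b: "b > 0" using quotient_of_denom_pos[OF ab] .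
  have x: "x = of_int a / of_int b" using quotient_of_div[OF ab] .
  have nb: "of_nat (nat b) = (of_int b :: rat)" using b by simp
  have xb: "x * of_int b = of_int a" using x b by simp
  show ?case
  proof (intro exI[of _ "r * nat b"] conjI ballI)
    show "1 \<le> r * nat b" using r b by (simp add: Suc_le_eq)
    fix e assume "e \<in> insert x S"
    then show "e * of_nat (r * nat b) \<in> \<int>"
    proof
      assume "e = x"
      then have "e * of_nat (r * nat b) = (x * of_int b) * of_nat r"
        using nb by (simp add: mult_ac)
      also have "\<dots> = of_int a * of_nat r" using xb by simp
      finally have "e * of_nat (r * nat b) = of_int a * of_nat r" .
      moreover have "(of_int a * of_nat r :: rat) \<in> \<int>" by (intro Ints_mult Ints_of_int Ints_of_nat)
      ultimately show ?thesis by metis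
    next
      assume "e \<in> S"
      then have "e * of_nat r \<in> \<int>" using r by auto
      then have "(e * of_nat r) * of_int b \<in> \<int>" by (rule Ints_mult[OF _ Ints_of_int])
      moreover have "e * of_nat (r * nat b) = (e * of_nat r) * of_int b" using nb by (simp add: mult_ac)
      ultimately show ?thesis by metis
    qed
  qed
qed

lemma good_mult: "good q R \<Longrightarrow> good q (R * t)"
  unfolding good_def
proof safe
  fix e assume "\<forall>e. q e \<noteq> 0 \<longrightarrow> e * of_nat R \<in> \<int>" "q e \<noteq> 0"
  then have "e * of_nat R \<in> \<int>" by auto
  then have "(e * of_nat R) * of_nat t \<in> \<int>" by (rule Ints_mult[OF _ Ints_of_nat])
  then show "e * of_nat (R * t) \<in> \<int>" by (simp add: mult_ac)
qed

lemma gal_pow_mod: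
  assumes "(gal ^^ R) p = p"
  shows "(gal ^^ t) p = (gal ^^ (t mod R)) p"
proof -
  have "\<And>n. (gal ^^ (R * n)) p = p"
  proof -
    fix n show "(gal ^^ (R * n)) p = p"
      by (induction n) (auto simp: funpow_add assms)
  qed
  then have "(gal ^^ (t mod R)) ((gal ^^ (R * (t div R))) p) = (gal ^^ (t mod R)) p" by simp
  moreover have "t = t mod R + R * (t div R)" by simp
  ultimately show ?thesis by (metis funpow_add comp_apply)
qed

locale cfg =
  fixes Q :: pit
  assumes pit: "is_pit Q"
begin

abbreviation "m \<equiv> length Q"
abbreviation "r \<equiv> ramQ Q"
abbreviation "s \<equiv> sQ Q"
abbreviation "K \<equiv> maxslope Q"
definition "qq i = snd (Q ! i)"
definition "nn i = fst (Q ! i)"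
definition "R i = ram (qq i)"
definition "E0 = (\<lambda>j. of_nat j / of_nat r :: rat) ` {1..s}"
definition "p a i = factor_of r s a i"

lemma qq_fin: "i < m \<Longrightarrow> finite {k. qq i k \<noteq> 0}"
  and qq_pos: "i < m \<Longrightarrow> qq i k \<noteq> 0 \<Longrightarrow> k > 0"
  and nn_pos: "i < m \<Longrightarrow> nn i > 0"
  using pit by (auto simp: is_pit_def expfactor_def qq_def nn_def)

lemma R_props: "i < m \<Longrightarrow> R i \<ge> 1" "i < m \<Longrightarrow> good (qq i) (R i)"
  "\<And>k. i < m \<Longrightarrow> 1 \<le> k \<Longrightarrow> k < R i \<Longrightarrow> \<not> good (qq i) k"
proof -
  fix i assume i: "i < m"
  obtain r0 :: nat where "r0 \<ge> 1" "\<forall>e\<in>{k. qq i k \<noteq> 0}. e * of_nat r0 \<in> \<int>"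
    using exists_common_denom[OF qq_fin[OF i]] by blast
  then have g: "good (qq i) r0" "r0 \<ge> 1" by (auto simp: good_def)
  show "R i \<ge> 1" "good (qq i) (R i)" using ram_props[OF g(2) g(1)] by (auto simp: R_def)
  fix k assume "1 \<le> k" "k < R i"
  then show "\<not> good (qq i) k" using ram_props[OF g(2) g(1)] by (auto simp: R_def)
qed

lemma R_dvd_r: "i < m \<Longrightarrow> R i dvd r"
  unfolding ramQ_def R_def qq_def by (intro dvd_Lcm) (auto intro!: imageI nth_mem)

lemma r_pos: "r \<ge> 1"
proof -
  have "0 \<notin> set (map (ram \<circ> snd) Q)"
  proof
    assume "0 \<in> set (map (ram \<circ> snd) Q)"
    then obtain i where "i < m" "ram (snd (Q ! i)) = 0" by (auto simp: in_set_conv_nth)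
    with R_props(1)[of i] show False by (simp add: R_def qq_def)
  qed
  then have "Lcm (set (map (ram \<circ> snd) Q)) \<noteq> 0" by (metis Lcm_0_iff finite_set)
  then show ?thesis unfolding ramQ_def by linarith
qed

lemma K_nonneg: "K \<ge> 0"
  unfolding maxslope_def by (rule Max_ge_iff[THEN iffD2]) auto

lemma slope_le_K: assumes i: "i < m" shows "slope (qq i) \<le> K"
proof -
  have "(slope \<circ> snd) (Q!i) \<in> set (map (slope \<circ> snd) Q)"
    by (simp only: set_map) (rule imageI, rule nth_mem, rule i)
  then show ?thesis unfolding maxslope_def qq_def by (intro Max_ge) auto
qed

lemma E0_fin: "finite E0" unfolding E0_def by simp

lemma E0_pos: "e \<in> E0 \<Longrightarrow> e > 0"
  using r_pos by (auto simp: E0_def)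

lemma E0_iff: "e \<in> E0 \<longleftrightarrow> (\<exists>j::nat. 1 \<le> j \<and> j \<le> s \<and> e = of_nat j / of_nat r)"
  unfolding E0_def by auto

lemma nat_floor_E0: "1 \<le> j \<Longrightarrow> nat \<lfloor>(of_nat j / of_nat r :: rat) * of_nat r\<rfloor> = j"
  using r_pos by simp

lemma p_eq: "p a i e = (if e \<in> E0 then a (i, nat \<lfloor>e * of_nat r\<rfloor>) else 0)"
  unfolding p_def factor_of_def E0_iff by simp

lemma p_at: "1 \<le> j \<Longrightarrow> j \<le> s \<Longrightarrow> p a i (of_nat j / of_nat r) = a (i, j)"
  unfolding p_eq E0_iff using nat_floor_E0 by auto

lemma p_supp: "p a i e \<noteq> 0 \<Longrightarrow> e \<in> E0"
  unfolding p_eq by (auto split: if_splits)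

lemma p_add: "p (a + b) i e = p a i e + p b i e"
  unfolding p_eq by auto

lemma p_scale: "p (cscale c a) i e = c * p a i e"
  unfolding p_eq cscale_def by auto

lemma p_zero: "p 0 i e = 0"
  unfolding p_eq by auto

lemma qq_supp: assumes i: "i < m" and q: "qq i e \<noteq> 0" shows "e \<in> E0"
proof -
  have "good (qq i) r" using good_mult[OF R_props(2)[OF i]] R_dvd_r[OF i] by (auto elim!: dvdE)
  then have "e * of_nat r \<in> \<int>" using q by (auto simp: good_def)
  then obtain z :: int where z: "e * of_nat r = of_int z" by (auto elim: Ints_cases)
  have epos: "e > 0" using qq_pos[OF i q] .
  have rr: "(of_nat r :: rat) > 0" using r_pos by simp
  have zpos: "z > 0" using z epos rr by (metis mult_pos_pos of_int_0_less_iff)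
  have "e \<le> slope (qq i)"
    unfolding slope_def using q qq_fin[OF i] by (auto intro: Max_ge)
  then have eK: "e \<le> K" using slope_le_K[OF i] by simp
  have "of_int z \<le> of_nat r * K" using eK z rr by (metis mult.commute mult_right_mono less_imp_le)
  then have "z \<le> \<lfloor>of_nat r * K\<rfloor>" by (simp add: le_floor_iff)
  then have "nat z \<le> s" unfolding sQ_def by simp
  moreover have "e = of_nat (nat z) / of_nat r" using z zpos rr by (simp add: field_simps)
  ultimately show ?thesis unfolding E0_iff using zpos by (intro exI[of _ "nat z"]) auto
qed

definition "aQ = (\<lambda>(i,j). if i < m \<and> 1 \<le> j \<and> j \<le> s then qq i (of_nat j / of_nat r) else 0)"

lemma p_aQ: "i < m \<Longrightarrow> p aQ i = qq i"
proof
  fix e assume i: "i < m"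
  show "p aQ i e = qq i e"
  proof (cases "e \<in> E0")
    case True
    then obtain j where j: "1 \<le> j" "j \<le> s" "e = of_nat j / of_nat r" by (auto simp: E0_iff)
    then show ?thesis using p_at[OF j(1,2)] i by (simp add: aQ_def)
  next
    case False
    then show ?thesis using qq_supp[OF i] by (auto simp: p_eq)
  qed
qed

lemma Q_a_nth: "i < m \<Longrightarrow> Q_a Q a ! i = (nn i, p a i)"
  by (simp add: Q_a_def nn_def p_def)

lemma Q_a_len: "length (Q_a Q a) = m" by (simp add: Q_a_def)

lemma Q_a_aQ: "Q_a Q aQ = Q"
  by (rule nth_equalityI) (auto simp: Q_a_len Q_a_nth p_aQ nn_def qq_def)

lemma aQ_conf: "aQ \<in> conf m s" by (auto simp: conf_def aQ_def)

lemma pit_refl: "Q \<sim>\<^sub>p Q" using pit by (simp add: pit_equiv_def)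

lemma aQ_B: "aQ \<in> Bsp Q" using aQ_conf pit_refl by (simp add: Bsp_def Q_a_aQ)

end


interpretation cvs: vector_space cscale
  by unfold_locales (auto simp: cscale_def fun_eq_iff algebra_simps)

lemma cspan_eq: "cspan S = cvs.span S" by (simp add: cspan_def)
lemma cdim_eq: "cdim S = cvs.dim S" by (simp add: cdim_def)

lemma slope_zero_fun: "slope (\<lambda>_. 0) = 0" by (simp add: slope_def)

lemma fdiff_self: "fdiff x x = (\<lambda>_. 0)" by (simp add: fdiff_def)

lemma fdiff_zero_iff: "fdiff x y = (\<lambda>_. 0) \<longleftrightarrow> x = y"
  by (auto simp: fdiff_def fun_eq_iff)

context cfg begin

definition "D a i j k l = fdiff ((gal ^^ k) (p a i)) ((gal ^^ l) (p a j))"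
definition "dd i j k l = slope (fdiff ((gal ^^ k) (qq i)) ((gal ^^ l) (qq j)))"
definition "cond a \<longleftrightarrow> (\<forall>i<m. \<forall>j<m. \<forall>k\<le>R i. \<forall>l\<le>R j. slope (D a i j k l) = dd i j k l)"

lemma D_eq: "D a i j k l e = zeta e ^ k * p a i e - zeta e ^ l * p a j e"
  by (simp add: D_def fdiff_def gal_pow)

lemma D_supp: assumes "D a i j k l e \<noteq> 0" shows "e \<in> E0"
proof (rule ccontr)
  assume "e \<notin> E0"
  then have "p a i e = 0" "p a j e = 0" using p_supp by blast+
  then show False using assms by (simp add: D_eq)
qed

lemma D_fin: "finite {e. D a i j k l e \<noteq> 0}"
  by (rule finite_subset[OF _ E0_fin]) (auto dest: D_supp)

lemma D_pos: "D a i j k l e \<noteq> 0 \<Longrightarrow> e > 0"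
  using D_supp E0_pos by blast

lemma D_aQ: "i < m \<Longrightarrow> j < m \<Longrightarrow> D aQ i j k l = fdiff ((gal ^^ k) (qq i)) ((gal ^^ l) (qq j))"
  by (simp add: D_def p_aQ)

lemma dd_D: "i < m \<Longrightarrow> j < m \<Longrightarrow> dd i j k l = slope (D aQ i j k l)"
  by (simp add: dd_def D_aQ)

lemma dd_nonneg: "i < m \<Longrightarrow> j < m \<Longrightarrow> dd i j k l \<ge> 0"
  unfolding dd_D by (rule slope_nonneg[OF D_fin D_pos])

lemma slope_D_zero: "slope (D a i j k l) = 0 \<longleftrightarrow> D a i j k l = (\<lambda>_. 0)"
  by (rule slope_zero_iff[OF D_fin D_pos])

lemma dd_zero_iff: "i < m \<Longrightarrow> j < m \<Longrightarrow> dd i j k l = 0 \<longleftrightarrow> (gal ^^ k) (qq i) = (gal ^^ l) (qq j)"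
  unfolding dd_D slope_D_zero by (simp add: D_aQ fdiff_zero_iff)

lemma D_zero_iff: "D a i j k l = (\<lambda>_. 0) \<longleftrightarrow> (gal ^^ k) (p a i) = (gal ^^ l) (p a j)"
  by (simp add: D_def fdiff_zero_iff)

lemma cond_fixR:
  assumes c: "cond a" and i: "i < m"
  shows "(gal ^^ R i) (p a i) = p a i"
proof -
  have "slope (D a i i (R i) 0) = dd i i (R i) 0" using c i by (auto simp: cond_def)
  moreover have "dd i i (R i) 0 = 0"
    using i R_props(2)[OF i] by (simp add: dd_zero_iff gal_pow_fix)
  ultimately have "D a i i (R i) 0 = (\<lambda>_. 0)" using slope_D_zero by simp
  then show ?thesis by (simp add: D_zero_iff)
qed

lemma cond_pit:
  assumes c: "cond a"
  shows "is_pit (Q_a Q a)"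
  unfolding is_pit_def Q_a_len
proof (intro conjI allI impI)
  fix i assume i: "i < m"
  show "0 < fst (Q_a Q a ! i)" using nn_pos[OF i] by (simp add: Q_a_nth[OF i])
  have "finite {k. p a i k \<noteq> 0}" by (rule finite_subset[OF _ E0_fin]) (auto dest: p_supp)
  moreover have "\<forall>k. p a i k \<noteq> 0 \<longrightarrow> k > 0" using p_supp E0_pos by blast
  ultimately show "expfactor (snd (Q_a Q a ! i))" by (simp add: Q_a_nth[OF i] expfactor_def)
next
  fix i j t assume i: "i < m" and j: "j < m" and ij: "i \<noteq> j"
  let ?k = "t mod R i"
  have Ri: "R i \<ge> 1" using R_props(1)[OF i] .
  have tk: "(gal ^^ t) (p a i) = (gal ^^ ?k) (p a i)" by (rule gal_pow_mod[OF cond_fixR[OF c i]])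
  have k: "?k \<le> R i" using Ri by (simp add: order.strict_implies_order)
  have "slope (D a i j ?k 0) = dd i j ?k 0" using c i j k by (auto simp: cond_def)
  moreover have "dd i j ?k 0 \<noteq> 0"
    using pit i j ij by (simp add: dd_zero_iff[OF i j] is_pit_def qq_def)
  ultimately have "D a i j ?k 0 \<noteq> (\<lambda>_. 0)" using slope_D_zero[of a i j ?k 0] by auto
  then have "(gal ^^ ?k) (p a i) \<noteq> p a j" by (simp add: D_zero_iff)
  then show "(gal ^^ t) (snd (Q_a Q a ! i)) \<noteq> snd (Q_a Q a ! j)"
    using tk by (simp add: Q_a_nth[OF i] Q_a_nth[OF j])
qed

lemma charB:
  assumes a: "a \<in> conf m s"
  shows "a \<in> Bsp Q \<longleftrightarrow> cond a"
proof
  assume "a \<in> Bsp Q"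
  then have e: "Q_a Q a \<sim>\<^sub>p Q" by (simp add: Bsp_def)
  show "cond a" unfolding cond_def
  proof (intro allI impI)
    fix i j k l assume i: "i < m" and j: "j < m" and k: "k \<le> R i" and l: "l \<le> R j"
    have "slope (fdiff ((gal ^^ k) (snd (Q_a Q a ! i))) ((gal ^^ l) (snd (Q_a Q a ! j))))
      = slope (fdiff ((gal ^^ k) (snd (Q ! i))) ((gal ^^ l) (snd (Q ! j))))"
      using e i j k l by (simp add: pit_equiv_def R_def qq_def)
    then show "slope (D a i j k l) = dd i j k l"
      by (simp add: Q_a_nth[OF i] Q_a_nth[OF j] D_def dd_def qq_def)
  qed
next
  assume c: "cond a"
  have "map fst (Q_a Q a) = map fst Q"
    by (rule nth_equalityI) (auto simp: Q_a_len Q_a_nth nn_def)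
  moreover have "\<forall>i<m. \<forall>j<m. \<forall>k\<le>ram (snd (Q ! i)). \<forall>l\<le>ram (snd (Q ! j)).
        slope (fdiff ((gal ^^ k) (snd (Q_a Q a ! i))) ((gal ^^ l) (snd (Q_a Q a ! j))))
      = slope (fdiff ((gal ^^ k) (snd (Q ! i))) ((gal ^^ l) (snd (Q ! j))))"
    using c by (simp add: cond_def Q_a_nth D_def dd_def qq_def R_def)
  ultimately have "Q_a Q a \<sim>\<^sub>p Q"
    using cond_pit[OF c] pit by (simp add: pit_equiv_def Q_a_len)
  then show "a \<in> Bsp Q" using a by (simp add: Bsp_def)
qed

lemma cond_char: "cond a \<longleftrightarrow> (\<forall>i<m. \<forall>j<m. \<forall>k\<le>R i. \<forall>l\<le>R j.
    (\<forall>e > dd i j k l. D a i j k l e = 0) \<and> (dd i j k l \<noteq> 0 \<longrightarrow> D a i j k l (dd i j k l) \<noteq> 0))"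
  unfolding cond_def using slope_char[OF D_fin D_pos dd_nonneg] by simp

definition "Vset = {a \<in> conf m s. \<forall>i<m. \<forall>j<m. \<forall>k\<le>R i. \<forall>l\<le>R j.
    \<forall>e > dd i j k l. D a i j k l e = 0}"
definition "Uset = {a. \<forall>i<m. \<forall>j<m. \<forall>k\<le>R i. \<forall>l\<le>R j.
    dd i j k l \<noteq> 0 \<longrightarrow> D a i j k l (dd i j k l) \<noteq> 0}"

lemma B_VU: "Bsp Q = Vset \<inter> Uset"
proof (intro set_eqI iffI)
  fix a assume aB: "a \<in> Bsp Q"
  then have a: "a \<in> conf m s" by (simp add: Bsp_def)
  have "cond a" using aB charB[OF a] by simp
  then have h: "\<forall>i<m. \<forall>j<m. \<forall>k\<le>R i. \<forall>l\<le>R j.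
    (\<forall>e > dd i j k l. D a i j k l e = 0) \<and> (dd i j k l \<noteq> 0 \<longrightarrow> D a i j k l (dd i j k l) \<noteq> 0)"
    by (simp only: cond_char)
  have "a \<in> Vset" unfolding Vset_def using a h by simp
  moreover have "a \<in> Uset" unfolding Uset_def using h by simp
  ultimately show "a \<in> Vset \<inter> Uset" by blast
next
  fix a assume "a \<in> Vset \<inter> Uset"
  then have a: "a \<in> conf m s" and h1: "\<forall>i<m. \<forall>j<m. \<forall>k\<le>R i. \<forall>l\<le>R j.
    \<forall>e > dd i j k l. D a i j k l e = 0" and h2: "\<forall>i<m. \<forall>j<m. \<forall>k\<le>R i. \<forall>l\<le>R j.
    dd i j k l \<noteq> 0 \<longrightarrow> D a i j k l (dd i j k l) \<noteq> 0"
    unfolding Vset_def Uset_def by auto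
  have "cond a" unfolding cond_char using h1 h2 by simp
  then show "a \<in> Bsp Q" using charB[OF a] by simp
qed

lemma B_conf: "Bsp Q \<subseteq> conf m s" by (auto simp: Bsp_def)

lemma D_add: "D (a + b) i j k l e = D a i j k l e + D b i j k l e"
  by (simp add: D_eq p_add algebra_simps)
lemma D_scale: "D (cscale c a) i j k l e = c * D a i j k l e"
  by (simp add: D_eq p_scale algebra_simps)
lemma D_zero: "D 0 i j k l e = 0"
  by (simp add: D_eq p_zero)

lemma conf_add: "a \<in> conf m s \<Longrightarrow> b \<in> conf m s \<Longrightarrow> a + b \<in> conf m s"
  by (auto simp: conf_def)
lemma conf_scale: "a \<in> conf m s \<Longrightarrow> cscale c a \<in> conf m s"
  by (auto simp: conf_def cscale_def)
lemma conf_zero: "0 \<in> conf m s"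
  by (auto simp: conf_def)

lemma Vset_subspace: "cvs.subspace Vset"
  unfolding cvs.subspace_def Vset_def
  by (auto simp: D_add D_scale D_zero conf_add conf_scale conf_zero)

lemma coord_cont: "continuous_on UNIV (\<lambda>a::nat \<times> nat \<Rightarrow> complex. a x)"
  by (rule continuous_on_product_coordinates)

lemma p_cont: "continuous_on UNIV (\<lambda>a. p a i e)"
  unfolding p_eq by (cases "e \<in> E0") (auto intro: coord_cont)

lemma D_cont: "continuous_on UNIV (\<lambda>a. D a i j k l e)"
  unfolding D_eq by (intro continuous_intros p_cont)

lemma Uset_open: "open Uset"
proof -
  define Uc where "Uc i j k l = {a. dd i j k l \<noteq> 0 \<longrightarrow> D a i j k l (dd i j k l) \<noteq> 0}" for i j k l
  have oU: "open (Uc i j k l)" for i j k l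
  proof (cases "dd i j k l = 0")
    case True then show ?thesis by (simp add: Uc_def)
  next
    case False
    have "open {a. D a i j k l (dd i j k l) \<noteq> (\<lambda>_. 0) a}"
      by (rule open_Collect_neq[OF D_cont continuous_on_const])
    then show ?thesis using False by (simp add: Uc_def)
  qed
  have eq: "Uset = (\<Inter>i\<in>{..<m}. \<Inter>j\<in>{..<m}. \<Inter>k\<in>{..R i}. \<Inter>l\<in>{..R j}. Uc i j k l)"
    unfolding Uset_def Uc_def by (simp add: set_eq_iff lessThan_def atMost_def)
  show ?thesis unfolding eq by (intro open_INT finite_lessThan finite_atMost ballI oU)
qed

lemma openin_sub:
  assumes "S = V \<inter> Uset" "cvs.subspace V"
  shows "openin (top_of_set (cspan S)) S"
proof -
  have "cspan S \<subseteq> V" unfolding cspan_eq using assms by (intro cvs.span_minimal) auto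
  moreover have "S \<subseteq> cspan S" unfolding cspan_eq by (rule cvs.span_superset)
  ultimately have "S = cspan S \<inter> Uset" using assms(1) by auto
  then show ?thesis unfolding openin_open using Uset_open by blast
qed

lemma B_openin: "openin (top_of_set (cspan (Bsp Q))) (Bsp Q)"
  by (rule openin_sub[OF B_VU Vset_subspace])

end


lemma geo_sum_zeta:
  assumes "good f R" "R \<ge> 1"
  shows "(\<Sum>t<R. zeta e ^ t * f e) = (if e \<in> \<int> then of_nat R * f e else 0)"
proof (cases "f e = 0")
  case True then show ?thesis by simp
next
  case False
  then have "e * of_nat R \<in> \<int>" using assms(1) by (auto simp: good_def)
  then have zR: "zeta e ^ R = 1" by (simp add: zeta_pow_eq_1)
  have "(\<Sum>t<R. zeta e ^ t * f e) = (\<Sum>t<R. zeta e ^ t) * f e" by (simp add: sum_distrib_right)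
  also have "\<dots> = (if e \<in> \<int> then of_nat R * f e else 0)"
    by (simp add: sum_gp_strict zR zeta_eq_1)
  finally show ?thesis .
qed

context cfg begin

lemma good_iff_D: "good (p a i) k \<longleftrightarrow> D a i i k 0 = (\<lambda>_. 0)"
  by (simp add: D_zero_iff gal_pow_fix)

lemma ram_p:
  assumes aB: "a \<in> Bsp Q" and i: "i < m"
  shows "ram (p a i) = R i"
proof -
  have c: "cond a" using aB charB B_conf by blast
  have eqv: "good (p a i) k \<longleftrightarrow> good (qq i) k" if k: "k \<le> R i" for k
  proof -
    have "slope (D a i i k 0) = dd i i k 0" using c i k by (auto simp: cond_def)
    then have "D a i i k 0 = (\<lambda>_. 0) \<longleftrightarrow> dd i i k 0 = 0" using slope_D_zero by metis
    then show ?thesis by (simp add: good_iff_D dd_zero_iff[OF i i] gal_pow_fix)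
  qed
  show ?thesis
  proof (rule ram_unique)
    show "1 \<le> R i" using R_props(1)[OF i] .
    show "good (p a i) (R i)" using eqv[of "R i"] R_props(2)[OF i] by simp
    fix k assume "1 \<le> k" "k < R i"
    then show "\<not> good (p a i) k" using eqv[of k] R_props(3)[OF i] by simp
  qed
qed

definition "Lc a n = (\<Sum>i<m. of_nat (nn i) * of_nat (R i) * a (i, n * r))"
definition "Tset = {a. \<forall>n. 1 \<le> n \<and> n * r \<le> s \<longrightarrow> Lc a n = 0}"

lemma good_p_r: "good (p a i) r"
  unfolding good_def
proof (intro allI impI)
  fix e assume "p a i e \<noteq> 0"
  then have "e \<in> E0" by (rule p_supp)
  then obtain j where "e = of_nat j / of_nat r" by (auto simp: E0_iff)
  then have "e * of_nat r = of_nat j" using r_pos by simp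
  then show "e * of_nat r \<in> \<int>" by simp
qed

lemma Tr_eq:
  assumes aB: "a \<in> Bsp Q"
  shows "Tr (Q_a Q a) e = (if e \<in> \<int> then (\<Sum>i<m. of_nat (nn i) * (of_nat (R i) * p a i e)) else 0)"
proof -
  have "Tr (Q_a Q a) e = (\<Sum>i<m. of_nat (nn i) * (\<Sum>t<R i. zeta e ^ t * p a i e))"
    unfolding Tr_def Q_a_len
    by (intro sum.cong refl) (simp add: Q_a_nth ram_p[OF aB] gal_pow)
  also have "\<dots> = (\<Sum>i<m. of_nat (nn i) * (if e \<in> \<int> then of_nat (R i) * p a i e else 0))"
  proof (intro sum.cong refl)
    fix i assume "i \<in> {..<m}"
    then have i: "i < m" by simp
    have g: "good (p a i) (R i)" using ram_props(2)[OF r_pos good_p_r, of a i] ram_p[OF aB i] by simp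
    show "of_nat (nn i) * (\<Sum>t<R i. zeta e ^ t * p a i e) = of_nat (nn i) * (if e \<in> \<int> then of_nat (R i) * p a i e else 0)"
      by (simp add: geo_sum_zeta[OF g R_props(1)[OF i]])
  qed
  also have "\<dots> = (if e \<in> \<int> then (\<Sum>i<m. of_nat (nn i) * (of_nat (R i) * p a i e)) else 0)"
    by simp
  finally show ?thesis .
qed

lemma p_nat:
  assumes "1 \<le> n" "n * r \<le> s"
  shows "p a i (of_nat n) = a (i, n * r)"
proof -
  have "(of_nat n :: rat) = of_nat (n * r) / of_nat r" using r_pos by simp
  moreover have "1 \<le> n * r" using assms(1) r_pos by simp
  ultimately show ?thesis using p_at[of "n * r" a i] assms by simp
qed

lemma Ints_E0:
  assumes "e \<in> \<int>" "e \<in> E0"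
  obtains n where "1 \<le> n" "n * r \<le> s" "e = of_nat n"
proof -
  obtain j where j: "1 \<le> j" "j \<le> s" "e = of_nat j / of_nat r" using assms(2) by (auto simp: E0_iff)
  obtain z :: int where z: "e = of_int z" using assms(1) by (auto elim: Ints_cases)
  have rr: "(of_nat r :: rat) > 0" using r_pos by simp
  have jz: "(of_nat j :: rat) = of_int z * of_nat r" using j z rr by (simp add: field_simps)
  then have "(of_int (int j) :: rat) = of_int (z * int r)" by simp
  then have jz2: "int j = z * int r" by (simp only: of_int_eq_iff)
  have "z * int r > 0" using jz2 j(1) by linarith
  then have zpos: "z > 0" using r_pos by (simp add: zero_less_mult_iff)
  have "int (nat z * r) = int j" using jz2 zpos by simp
  then have nj: "nat z * r = j" by (simp only: of_nat_eq_iff)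
  show ?thesis
  proof
    show "1 \<le> nat z" using zpos by simp
    show "nat z * r \<le> s" using nj j by simp
    show "e = of_nat (nat z)" using z zpos by simp
  qed
qed

lemma trace_iff:
  assumes aB: "a \<in> Bsp Q"
  shows "Tr (Q_a Q a) = (\<lambda>_. 0) \<longleftrightarrow> a \<in> Tset"
proof -
  define Pe where "Pe e = (\<Sum>i<m. of_nat (nn i) * (of_nat (R i) * p a i e))" for e
  have Pn: "Pe (of_nat n) = Lc a n" if "1 \<le> n" "n * r \<le> s" for n
    unfolding Pe_def Lc_def using p_nat[OF that] by (simp add: mult_ac)
  have "Tr (Q_a Q a) = (\<lambda>_. 0) \<longleftrightarrow> (\<forall>e\<in>\<int>. Pe e = 0)"
    by (auto simp: fun_eq_iff Tr_eq[OF aB] Pe_def)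
  also have "\<dots> \<longleftrightarrow> a \<in> Tset"
  proof
    assume h: "\<forall>e\<in>\<int>. Pe e = 0"
    show "a \<in> Tset" unfolding Tset_def
    proof (intro CollectI allI impI)
      fix n assume n: "1 \<le> n \<and> n * r \<le> s"
      have "Pe (of_nat n) = 0" using h by simp
      then show "Lc a n = 0" using Pn n by simp
    qed
  next
    assume T: "a \<in> Tset"
    show "\<forall>e\<in>\<int>. Pe e = 0"
    proof
      fix e :: rat assume e: "e \<in> \<int>"
      show "Pe e = 0"
      proof (cases "e \<in> E0")
        case True
        then obtain n where n: "1 \<le> n" "n * r \<le> s" "e = of_nat n" using Ints_E0 e by blast
        then show ?thesis using Pn[OF n(1,2)] T by (simp add: Tset_def)
      next
        case False
        then have "\<And>i. p a i e = 0" using p_supp by blast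
        then show ?thesis by (simp add: Pe_def)
      qed
    qed
  qed
  finally show ?thesis .
qed

lemma SB_eq: "SBsp Q = Bsp Q \<inter> Tset"
  using trace_iff by (auto simp: SBsp_def)

lemma Lc_add: "Lc (a + b) n = Lc a n + Lc b n"
  by (simp add: Lc_def algebra_simps sum.distrib)
lemma Lc_scale: "Lc (cscale c a) n = c * Lc a n"
  by (simp add: Lc_def cscale_def sum_distrib_left algebra_simps)
lemma Lc_zero: "Lc 0 n = 0"
  by (simp add: Lc_def)

lemma Tset_subspace: "cvs.subspace Tset"
  unfolding cvs.subspace_def Tset_def by (simp add: Lc_add Lc_scale Lc_zero)

lemma SB_openin: "openin (top_of_set (cspan (SBsp Q))) (SBsp Q)"
proof (rule openin_sub)
  show "SBsp Q = (Vset \<inter> Tset) \<inter> Uset" using SB_eq B_VU by blast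
  show "cvs.subspace (Vset \<inter> Tset)" using Vset_subspace Tset_subspace by (rule cvs.subspace_inter)
qed

end


lemma snd_coord_cont [continuous_intros]:
  "continuous_on S (\<lambda>x::real \<times> (nat \<times> nat \<Rightarrow> complex). snd x q)"
  by (rule continuous_on_product_then_coordinatewise[OF continuous_on_snd[OF continuous_on_id]])

context cfg begin

definition "W c = (\<lambda>(i,j). if i < m \<and> 1 \<le> j \<and> j \<le> s \<and> r dvd j then c (j div r) else 0)"
definition "Nn = (\<Sum>i<m. of_nat (nn i) * of_nat (R i) :: complex)"

lemma W_conf: "W c \<in> conf m s" by (auto simp: conf_def W_def)

lemma p_W_same: "i < m \<Longrightarrow> j < m \<Longrightarrow> p (W c) i e = p (W c) j e"
  by (simp add: p_eq W_def)

lemma p_W_fix: "zeta e ^ k * p (W c) i e = p (W c) i e"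
proof (cases "p (W c) i e = 0")
  case False
  then have e: "e \<in> E0" by (rule p_supp)
  then obtain j where j: "1 \<le> j" "j \<le> s" "e = of_nat j / of_nat r" by (auto simp: E0_iff)
  have "p (W c) i e = W c (i, j)" using p_at[OF j(1,2)] j(3) by simp
  then have "r dvd j" using False by (auto simp: W_def split: if_splits)
  then obtain t where t: "j = r * t" by (auto elim: dvdE)
  have "e = of_nat t" using j(3) t r_pos by simp
  then have "zeta e = 1" by (simp add: zeta_eq_1)
  then show ?thesis by simp
qed simp

lemma D_W: "i < m \<Longrightarrow> j < m \<Longrightarrow> D (W c) i j k l e = 0"
  by (simp add: D_eq p_W_fix p_W_same[of i j])

lemma D_transl: "i < m \<Longrightarrow> j < m \<Longrightarrow> D (a + W c) i j k l = D a i j k l"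
  by (rule ext) (simp add: D_add D_W)

lemma cond_transl: "cond (a + W c) \<longleftrightarrow> cond a"
  unfolding cond_def by (simp add: D_transl)

lemma B_transl: "a \<in> Bsp Q \<Longrightarrow> a + W c \<in> Bsp Q"
  using charB[OF conf_add[OF _ W_conf]] charB B_conf cond_transl by blast

lemma Lc_W: assumes "1 \<le> n" "n * r \<le> s" shows "Lc (W c) n = Nn * c n"
proof -
  have "W c (i, n * r) = c n" if "i < m" for i
  proof -
    have "1 \<le> n * r" using assms(1) r_pos by simp
    moreover have "(n * r) div r = n" using r_pos by simp
    ultimately show ?thesis using that assms(2) by (simp add: W_def)
  qed
  then show ?thesis unfolding Lc_def Nn_def sum_distrib_right by (intro sum.cong) auto
qed

lemma W_zero_valid:
  assumes "\<And>n. 1 \<le> n \<Longrightarrow> n * r \<le> s \<Longrightarrow> c n = 0"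
  shows "W c = 0"
proof (rule ext)
  fix x :: "nat \<times> nat"
  obtain i j where x: "x = (i, j)" by (cases x)
  show "W c x = 0 x"
  proof (cases "i < m \<and> 1 \<le> j \<and> j \<le> s \<and> r dvd j")
    case True
    then obtain t where t: "j = r * t" by (auto elim: dvdE)
    have "j div r = t" using t r_pos by simp
    moreover have "1 \<le> t" using True t by (cases t) auto
    moreover have "t * r \<le> s" using True t by (simp add: mult.commute)
    ultimately show ?thesis using True assms by (simp add: W_def x)
  next
    case False
    then show ?thesis by (auto simp: W_def x)
  qed
qed

lemma W_0: "W (\<lambda>_. 0) = 0"
  by (rule W_zero_valid) simp

lemma Nn_nz: assumes "m \<ge> 1" shows "Nn \<noteq> 0"
proof -
  have eq: "Nn = of_nat (\<Sum>i<m. nn i * R i)" by (simp add: Nn_def)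
  have "nn 0 * R 0 \<le> (\<Sum>i<m. nn i * R i)"
  proof (rule member_le_sum)
    show "0 \<in> {..<m}" using assms by (cases Q) auto
  qed auto
  moreover have "nn 0 * R 0 > 0"
  proof -
    have m0: "0 < m" using assms by linarith
    show ?thesis using nn_pos[OF m0] R_props(1)[OF m0] by (simp add: Suc_le_eq)
  qed
  ultimately have "(\<Sum>i<m. nn i * R i) \<noteq> 0" by linarith
  then show ?thesis unfolding eq by (simp only: of_nat_eq_0_iff not_False_eq_True)
qed

definition "cc a n = Lc a n * inverse Nn"
definition "H x = snd x + W (\<lambda>n. - of_real (1 - fst x) * cc (snd x) n)"
definition "rho a = H (0, a)"

lemma H_1: "H (1, a) = a" by (simp add: H_def W_0)

lemma H_B: "a \<in> Bsp Q \<Longrightarrow> H (t, a) \<in> Bsp Q"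
  unfolding H_def by (simp add: B_transl)

lemma rho_eq: "rho a = a + W (\<lambda>n. - cc a n)"
  by (simp add: rho_def H_def)

lemma rho_SB: assumes "m \<ge> 1" "a \<in> Bsp Q" shows "rho a \<in> SBsp Q"
proof -
  have "rho a \<in> Bsp Q" using assms(2) by (simp add: rho_def H_B)
  moreover have "rho a \<in> Tset"
    unfolding Tset_def
  proof (intro CollectI allI impI)
    fix n assume n: "1 \<le> n \<and> n * r \<le> s"
    have "Lc (rho a) n = Lc a n + Nn * (- (Lc a n * inverse Nn))"
      using n by (simp add: rho_eq Lc_add Lc_W cc_def)
    also have "\<dots> = 0" using Nn_nz[OF assms(1)] by simp
    finally show "Lc (rho a) n = 0" .
  qed
  ultimately show ?thesis using SB_eq by blast
qed

lemma rho_id: assumes "a \<in> SBsp Q" shows "rho a = a"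
proof -
  have "a \<in> Tset" using assms SB_eq by blast
  then have "W (\<lambda>n. - cc a n) = 0"
    by (intro W_zero_valid) (simp add: Tset_def cc_def)
  then show ?thesis by (simp add: rho_eq)
qed

lemma H_coord: "H x (i, j) = snd x (i, j) +
   (if i < m \<and> 1 \<le> j \<and> j \<le> s \<and> r dvd j
    then - of_real (1 - fst x) * ((\<Sum>i'<m. of_nat (nn i') * of_nat (R i') * snd x (i', (j div r) * r)) * inverse Nn) else 0)"
  by (simp add: H_def W_def cc_def Lc_def)

lemma H_cont: "continuous_on UNIV H"
proof (rule continuous_on_coordinatewise_then_product)
  fix ij :: "nat \<times> nat"
  obtain i j where ij: "ij = (i, j)" by (cases ij)
  show "continuous_on UNIV (\<lambda>x. H x ij)"
    unfolding ij H_coord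
    by (cases "i < m \<and> 1 \<le> j \<and> j \<le> s \<and> r dvd j") (auto intro!: continuous_intros)
qed

lemma rho_cont: "continuous_on UNIV rho"
proof -
  have "continuous_on UNIV (\<lambda>a. H (0, a))"
    by (rule continuous_on_compose2[OF H_cont]) (auto intro: continuous_intros)
  then show ?thesis by (simp add: rho_def[abs_def])
qed

lemma SB_sub: "SBsp Q \<subseteq> Bsp Q" by (auto simp: SBsp_def)

lemma homeq: assumes "m \<ge> 1"
  shows "top_of_set (SBsp Q) homotopy_equivalent_space top_of_set (Bsp Q)"
proof -
  let ?X = "top_of_set (Bsp Q)" and ?Y = "top_of_set (SBsp Q)"
  have "homotopic_with (\<lambda>x. True) ?X ?X rho id"
    unfolding homotopic_with_def
  proof (intro exI[of _ H] conjI allI ballI)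
    show "continuous_map (prod_topology (top_of_set {0..1}) ?X) ?X H"
      unfolding prod_topology_subtopology_eu continuous_map_subtopology_eu
    proof
      show "continuous_on ({0..1} \<times> Bsp Q) H" using H_cont by (rule continuous_on_subset) simp
      show "H \<in> {0..1} \<times> Bsp Q \<rightarrow> Bsp Q" using H_B by auto
    qed
  qed (auto simp: rho_def H_1)
  moreover have "retraction_maps ?X ?Y rho id"
    unfolding retraction_maps_def
  proof (intro conjI ballI)
    show "continuous_map ?X ?Y rho"
      unfolding continuous_map_subtopology_eu
      using rho_cont rho_SB[OF assms] by (auto intro: continuous_on_subset)
    show "continuous_map ?Y ?X id"
      unfolding continuous_map_subtopology_eu using SB_sub by (auto intro: continuous_on_id)
    fix x assume "x \<in> topspace ?Y"
    then show "rho (id x) = x" using rho_id by simp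
  qed
  ultimately have "?X homotopy_equivalent_space ?Y"
    by (rule deformation_retract_imp_homotopy_equivalent_space)
  then show ?thesis by (rule homotopy_equivalent_space_sym[THEN iffD1])
qed

end


context cfg begin

definition "Kf = nat \<lfloor>K\<rfloor>"
definition "ev n = W (\<lambda>k. if k = n then 1 else 0 :: complex)"

lemma valid_iff: "(1 \<le> n \<and> n * r \<le> s) \<longleftrightarrow> n \<in> {1..Kf}"
proof -
  have rr: "(of_nat r :: rat) > 0" using r_pos by simp
  have rK: "of_nat r * K \<ge> 0" using K_nonneg rr by simp
  have "n * r \<le> s \<longleftrightarrow> int (n * r) \<le> \<lfloor>of_nat r * K\<rfloor>"
    unfolding sQ_def using rK by (simp add: le_nat_iff)
  also have "\<dots> \<longleftrightarrow> of_int (int (n * r)) \<le> of_nat r * K" by (rule le_floor_iff)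
  also have "\<dots> \<longleftrightarrow> of_nat r * of_nat n \<le> of_nat r * K" by (simp add: mult.commute)
  also have "\<dots> \<longleftrightarrow> of_nat n \<le> K" using rr by simp
  also have "\<dots> \<longleftrightarrow> int n \<le> \<lfloor>K\<rfloor>" by (simp add: le_floor_iff)
  also have "\<dots> \<longleftrightarrow> n \<le> Kf" unfolding Kf_def using K_nonneg by (simp add: le_nat_iff)
  finally show ?thesis by auto
qed

lemma Lc_ev: assumes "n' \<in> {1..Kf}" shows "Lc (ev n) n' = (if n' = n then Nn else 0)"
proof -
  have v: "1 \<le> n'" "n' * r \<le> s" using valid_iff assms by blast+
  show ?thesis unfolding ev_def Lc_W[OF v] by simp
qed

lemma W_add: "W c + W c' = W (\<lambda>n. c n + c' n :: complex)"
  by (rule ext) (simp add: W_def split: prod.split)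

lemma rho_decomp: "a = rho a + W (cc a)"
  by (simp add: rho_eq add.assoc W_add W_0)

lemma W_sum: fixes c :: "nat \<Rightarrow> complex" shows "W c = (\<Sum>n\<in>{1..Kf}. cscale (c n) (ev n))"
proof (rule ext)
  fix x :: "nat \<times> nat"
  obtain i j where x: "x = (i, j)" by (cases x)
  show "W c x = (\<Sum>n\<in>{1..Kf}. cscale (c n) (ev n)) x"
  proof (cases "i < m \<and> 1 \<le> j \<and> j \<le> s \<and> r dvd j")
    case True
    then have T: "i < m" "1 \<le> j" "j \<le> s" "r dvd j" "Suc 0 \<le> j" "0 < j" by auto
    then obtain t where t: "j = r * t" by (auto elim: dvdE)
    have jt: "j div r = t" using t r_pos by simp
    have "1 \<le> t" using True t by (cases t) auto
    moreover have "t * r \<le> s" using True t by (simp add: mult.commute)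
    ultimately have tK: "t \<in> {1..Kf}" using valid_iff by blast
    have "(\<Sum>n\<in>{1..Kf}. cscale (c n) (ev n)) x = (\<Sum>n\<in>{1..Kf}. if t = n then c n else 0)"
      unfolding sum_fun_apply
      by (intro sum.cong refl) (auto simp: cscale_def ev_def W_def x jt T)
    also have "\<dots> = c t" using tK by simp
    finally have eq: "(\<Sum>n\<in>{1..Kf}. cscale (c n) (ev n)) x = c t" .
    show ?thesis unfolding eq by (simp add: W_def x jt T)
  next
    case False
    have "(\<Sum>n\<in>{1..Kf}. cscale (c n) (ev n)) x = 0"
      unfolding sum_fun_apply
      by (intro sum.neutral ballI) (use False in \<open>auto simp: cscale_def ev_def W_def x\<close>)
    moreover have "W c x = 0" using False by (auto simp: W_def x)
    ultimately show ?thesis by simp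
  qed
qed

lemma W_span: "W c \<in> cvs.span (ev ` {1..Kf})"
  unfolding W_sum by (intro cvs.span_sum cvs.span_scale[unfolded cscale_def[symmetric]] cvs.span_base) auto

definition "delta ij = (\<lambda>x. if x = ij then 1 else 0 :: complex)"

lemma conf_span: "conf m s \<subseteq> cvs.span (delta ` ({..<m} \<times> {1..s}))"
proof
  fix a assume a: "a \<in> conf m s"
  have "a = (\<Sum>ij\<in>{..<m} \<times> {1..s}. cscale (a ij) (delta ij))"
  proof (rule ext)
    fix x :: "nat \<times> nat"
    have "(\<Sum>ij\<in>{..<m} \<times> {1..s}. cscale (a ij) (delta ij)) x
        = (\<Sum>ij\<in>{..<m} \<times> {1..s}. if x = ij then a ij else 0)"
      unfolding sum_fun_apply by (intro sum.cong refl) (auto simp: cscale_def delta_def)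
    also have "\<dots> = (if x \<in> {..<m} \<times> {1..s} then a x else 0)" by simp
    also have "\<dots> = a x" using a by (cases x) (auto simp: conf_def Suc_le_eq)
    finally show "a x = (\<Sum>ij\<in>{..<m} \<times> {1..s}. cscale (a ij) (delta ij)) x" by simp
  qed
  also have "\<dots> \<in> cvs.span (delta ` ({..<m} \<times> {1..s}))"
    by (intro cvs.span_sum cvs.span_scale cvs.span_base) auto
  finally show "a \<in> cvs.span (delta ` ({..<m} \<times> {1..s}))" .
qed

lemma Lc_subspace: "cvs.subspace {x. Lc x n = 0}"
  unfolding cvs.subspace_def by (simp add: Lc_add Lc_scale Lc_zero)

lemma dim_main:
  assumes m1: "m \<ge> 1"
  shows "cdim (Bsp Q) = cdim (SBsp Q) + Kf"
proof -
  obtain S0 where S0: "S0 \<subseteq> SBsp Q" "cvs.independent S0" "SBsp Q \<subseteq> cvs.span S0"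
      "card S0 = cvs.dim (SBsp Q)"
    by (rule cvs.basis_exists)
  have S0conf: "S0 \<subseteq> conf m s" by (rule subset_trans[OF S0(1) subset_trans[OF SB_sub B_conf]])
  have sp: "S0 \<subseteq> cvs.span (delta ` ({..<m} \<times> {1..s}))" by (rule subset_trans[OF S0conf conf_span])
  have fd: "finite (delta ` ({..<m} \<times> {1..s}))" by simp
  have finS0: "finite S0" using cvs.independent_span_bound[OF fd S0(2) sp] by (rule conjunct1)
  have SBT: "SBsp Q \<subseteq> Tset" using SB_eq by (simp add: Int_lower2)
  have S0T: "S0 \<subseteq> Tset" by (rule subset_trans[OF S0(1) SBT])
  have NN: "Nn \<noteq> 0" by (rule Nn_nz[OF m1])
  have ind: "k \<le> Kf \<Longrightarrow> cvs.independent (S0 \<union> ev ` {1..k})" for k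
  proof (induction k)
    case 0
    then show ?case using S0(2) by simp
  next
    case (Suc k)
    have kK: "Suc k \<in> {1..Kf}" using Suc.prems by simp
    have sub: "S0 \<union> ev ` {1..k} \<subseteq> {x. Lc x (Suc k) = 0}"
    proof
      fix x assume "x \<in> S0 \<union> ev ` {1..k}"
      then show "x \<in> {x. Lc x (Suc k) = 0}"
      proof
        assume "x \<in> S0"
        then show ?thesis using S0T kK valid_iff by (auto simp: Tset_def)
      next
        assume "x \<in> ev ` {1..k}"
        then obtain n where "n \<in> {1..k}" "x = ev n" by blast
        then show ?thesis using Lc_ev[OF kK, of n] by simp
      qed
    qed
    have "cvs.span (S0 \<union> ev ` {1..k}) \<subseteq> {x. Lc x (Suc k) = 0}"
      by (rule cvs.span_minimal[OF sub Lc_subspace])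
    moreover have "Lc (ev (Suc k)) (Suc k) \<noteq> 0" using Lc_ev[OF kK] NN by simp
    ultimately have nin: "ev (Suc k) \<notin> cvs.span (S0 \<union> ev ` {1..k})" by blast
    have "cvs.independent (insert (ev (Suc k)) (S0 \<union> ev ` {1..k}))"
      by (rule cvs.independent_insertI[OF nin Suc.IH]) (use Suc.prems in simp)
    moreover have "insert (ev (Suc k)) (S0 \<union> ev ` {1..k}) = S0 \<union> ev ` {1..Suc k}"
      by (auto simp: atLeastAtMostSuc_conv)
    ultimately show ?case by simp
  qed
  let ?E = "ev ` {1..Kf}"
  have indep: "cvs.independent (S0 \<union> ?E)" using ind by simp
  have inj: "inj_on ev {1..Kf}"
  proof (rule inj_onI)
    fix n n' assume n: "n \<in> {1..Kf}" and n': "n' \<in> {1..Kf}" and e: "ev n = ev n'"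
    have "Lc (ev n) n = Nn" using Lc_ev[OF n] by simp
    moreover have "Lc (ev n') n = (if n = n' then Nn else 0)" using Lc_ev[OF n] by simp
    ultimately show "n = n'" using e NN by (auto split: if_splits)
  qed
  have disj: "S0 \<inter> ?E = {}"
  proof (rule ccontr)
    assume "S0 \<inter> ?E \<noteq> {}"
    then obtain n where n: "n \<in> {1..Kf}" "ev n \<in> S0" by blast
    then have "Lc (ev n) n = 0" using S0T valid_iff by (auto simp: Tset_def)
    then show False using Lc_ev[OF n(1)] NN by simp
  qed
  have card: "card (S0 \<union> ?E) = card S0 + Kf"
    using card_Un_disjoint[OF finS0 _ disj] card_image[OF inj] by simp
  have sub1: "S0 \<union> ?E \<subseteq> cvs.span (Bsp Q)"
  proof
    fix x assume "x \<in> S0 \<union> ?E"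
    then show "x \<in> cvs.span (Bsp Q)"
    proof
      assume "x \<in> S0"
      then show ?thesis using S0(1) SB_sub by (auto intro: cvs.span_base)
    next
      assume "x \<in> ?E"
      then obtain n where "x = ev n" by blast
      moreover have "aQ + ev n \<in> Bsp Q" unfolding ev_def by (rule B_transl[OF aQ_B])
      ultimately have "x = (aQ + ev n) - aQ" "aQ + ev n \<in> cvs.span (Bsp Q)" "aQ \<in> cvs.span (Bsp Q)"
        using aQ_B by (auto intro: cvs.span_base)
      then show ?thesis by (metis cvs.span_diff)
    qed
  qed
  have sub2: "Bsp Q \<subseteq> cvs.span (S0 \<union> ?E)"
  proof
    fix a assume aB: "a \<in> Bsp Q"
    have "rho a \<in> cvs.span S0" using rho_SB[OF m1 aB] S0(3) by blast
    then have "rho a \<in> cvs.span (S0 \<union> ?E)" using cvs.span_mono[of S0 "S0 \<union> ?E"] by blast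
    moreover have "W (cc a) \<in> cvs.span (S0 \<union> ?E)"
      using W_span cvs.span_mono[of ?E "S0 \<union> ?E"] by blast
    ultimately have "rho a + W (cc a) \<in> cvs.span (S0 \<union> ?E)" by (rule cvs.span_add)
    then show "a \<in> cvs.span (S0 \<union> ?E)" using rho_decomp[of a] by simp
  qed
  have "cvs.dim (cvs.span (Bsp Q)) = card S0 + Kf"
  proof (rule cvs.dim_unique[OF sub1 _ indep card])
    show "cvs.span (Bsp Q) \<subseteq> cvs.span (S0 \<union> ?E)"
      by (rule cvs.span_minimal[OF sub2]) simp
  qed
  then show ?thesis using S0(4) by (simp add: cdim_eq)
qed

end


theorem mainTheorem9:
  fixes Q :: pit
  assumes "is_pit Q"
  shows "openin (top_of_set (cspan (Bsp Q))) (Bsp Q)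
       \<and> openin (top_of_set (cspan (SBsp Q))) (SBsp Q)
       \<and> (top_of_set (SBsp Q)) homotopy_equivalent_space (top_of_set (Bsp Q))
       \<and> int (cdim (SBsp Q)) = int (cdim (Bsp Q)) - \<lfloor>maxslope Q\<rfloor>"
proof -
  interpret cfg Q by unfold_locales (rule assms)
  have o1: "openin (top_of_set (cspan (Bsp Q))) (Bsp Q)" by (rule B_openin)
  have o2: "openin (top_of_set (cspan (SBsp Q))) (SBsp Q)" by (rule SB_openin)
  show ?thesis
  proof (cases "length Q = 0")
    case True
    have SBB: "SBsp Q = Bsp Q"
    proof
      show "SBsp Q \<subseteq> Bsp Q" by (rule SB_sub)
      show "Bsp Q \<subseteq> SBsp Q"
      proof
        fix a assume "a \<in> Bsp Q"
        moreover have "length (Q_a Q a) = 0" using True by (simp only: Q_a_len)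
        then have "Tr (Q_a Q a) = (\<lambda>_. 0)" unfolding Tr_def by simp
        ultimately show "a \<in> SBsp Q" by (simp add: SBsp_def)
      qed
    qed
    have K0: "maxslope Q = 0" using True by (simp add: maxslope_def)
    show ?thesis using o1 o2 SBB K0 by (simp add: homotopy_equivalent_space_refl)
  next
    case False
    then have m1: "length Q \<ge> 1" by linarith
    have "int (cdim (Bsp Q)) = int (cdim (SBsp Q)) + int Kf" using dim_main[OF m1] by simp
    moreover have "int Kf = \<lfloor>maxslope Q\<rfloor>" unfolding Kf_def using K_nonneg by simp
    ultimately show ?thesis using o1 o2 homeq[OF m1] by simp
  qed
qed


end
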